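(* For $R_1,R_2\in\mathrm{DGRings}^{0,-1}$, the category $\mathrm{Corr}_{\mathrm{adm}}(R_1,R_2)$ is a groupoid.
   Context: Rings are commutative and unital. $\mathrm{DGRings}^{0,-1}$ is the category of commutative DG rings $R$ with $R^i=0$ for $i\ne 0,-1$. Equivalently, such $R$ is a ring $R^0$, an $R^0$-module $R^{-1}$ and an $R^0$-linear $d:R^{-1}\to R^0$ with $d(x)y=d(y)x$. A morphism is a quasi-isomorphism if it induces isomorphisms on $\ker d$ and $\operatorname{coker} d$. A correspondence from $R_1$ to $R_2$ is a diagram $R_1\xleftarrow{f}R_{12}\xrightarrow{g}R_2$ in $\mathrm{DGRings}^{0,-1}$. A morphism from it to $R_1\xleftarrow{f'}R'_{12}\xrightarrow{g'}R_2$ is a morphism $h:R_{12}\to R'_{12}$ with $f'h=f$, $g'h=g$. The correspondence is admissible if $f$ is a quasi-isomorphism and the map $R_{12}^{-1}\to R_1^{-1}\times R_2^{-1}$ is an isomorphism. $\mathrm{Corr}_{\mathrm{adm}}(R_1,R_2)$ is the full subcategory of admissible correspondences. *)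

theory Defs
  imports "HOL-Algebra.Module" "HOL-Algebra.RingHom"
begin

text \<open>A commutative DG ring concentrated in degrees 0 and -1:
  a commutative ring R^0, an R^0-module R^{-1}, and an R^0-linear
  d : R^{-1} -> R^0 with d(x) y = d(y) x.\<close>

record ('a, 'b) dgr =
  deg0 :: "'a ring"
  degm1 :: "('a, 'b) module"
  diff :: "'b \<Rightarrow> 'a"

definition is_dgr :: "('a, 'b) dgr \<Rightarrow> bool" where
  "is_dgr R \<longleftrightarrow>
     cring (deg0 R) \<and> module (deg0 R) (degm1 R) \<and>
     diff R \<in> carrier (degm1 R) \<rightarrow> carrier (deg0 R) \<and>
     (\<forall>x\<in>carrier (degm1 R). \<forall>y\<in>carrier (degm1 R).
        diff R (x \<oplus>\<^bsub>degm1 R\<^esub> y) = diff R x \<oplus>\<^bsub>deg0 R\<^esub> diff R y) \<and>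
     (\<forall>a\<in>carrier (deg0 R). \<forall>x\<in>carrier (degm1 R).
        diff R (a \<odot>\<^bsub>degm1 R\<^esub> x) = a \<otimes>\<^bsub>deg0 R\<^esub> diff R x) \<and>
     (\<forall>x\<in>carrier (degm1 R). \<forall>y\<in>carrier (degm1 R).
        diff R x \<odot>\<^bsub>degm1 R\<^esub> y = diff R y \<odot>\<^bsub>degm1 R\<^esub> x)"

type_synonym ('a, 'b, 'c, 'd) dgmor = "('a \<Rightarrow> 'c) \<times> ('b \<Rightarrow> 'd)"

definition is_dgmor :: "('a, 'b) dgr \<Rightarrow> ('c, 'd) dgr \<Rightarrow> ('a, 'b, 'c, 'd) dgmor \<Rightarrow> bool" where
  "is_dgmor R S f \<longleftrightarrow>
     fst f \<in> ring_hom (deg0 R) (deg0 S) \<and>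
     snd f \<in> carrier (degm1 R) \<rightarrow> carrier (degm1 S) \<and>
     (\<forall>x\<in>carrier (degm1 R). \<forall>y\<in>carrier (degm1 R).
        snd f (x \<oplus>\<^bsub>degm1 R\<^esub> y) = snd f x \<oplus>\<^bsub>degm1 S\<^esub> snd f y) \<and>
     (\<forall>a\<in>carrier (deg0 R). \<forall>x\<in>carrier (degm1 R).
        snd f (a \<odot>\<^bsub>degm1 R\<^esub> x) = fst f a \<odot>\<^bsub>degm1 S\<^esub> snd f x) \<and>
     (\<forall>x\<in>carrier (degm1 R). diff S (snd f x) = fst f (diff R x))"

definition dg_comp :: "('c, 'd, 'e, 'f) dgmor \<Rightarrow> ('a, 'b, 'c, 'd) dgmor \<Rightarrow> ('a, 'b, 'e, 'f) dgmor" where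
  "dg_comp g f = (fst g \<circ> fst f, snd g \<circ> snd f)"

definition dg_id :: "('a, 'b, 'a, 'b) dgmor" where
  "dg_id = (id, id)"

text \<open>Equality of morphisms R -> S (maps are only relevant on the carriers).\<close>
definition dgmor_eq :: "('a, 'b) dgr \<Rightarrow> ('a, 'b, 'c, 'd) dgmor \<Rightarrow> ('a, 'b, 'c, 'd) dgmor \<Rightarrow> bool" where
  "dgmor_eq R f g \<longleftrightarrow>
     (\<forall>a\<in>carrier (deg0 R). fst f a = fst g a) \<and> (\<forall>x\<in>carrier (degm1 R). snd f x = snd g x)"

definition dg_ker :: "('a, 'b) dgr \<Rightarrow> 'b set" where
  "dg_ker R = {x \<in> carrier (degm1 R). diff R x = \<zero>\<^bsub>deg0 R\<^esub>}"

definition dg_im :: "('a, 'b) dgr \<Rightarrow> 'a set" where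
  "dg_im R = diff R ` carrier (degm1 R)"

text \<open>Quasi-isomorphism: the induced maps on ker d and on coker d = R^0 / im d
  are bijective.  The map on cokernels is r + im d_R |-> f0 r + im d_S.\<close>
definition is_quasi_iso :: "('a, 'b) dgr \<Rightarrow> ('c, 'd) dgr \<Rightarrow> ('a, 'b, 'c, 'd) dgmor \<Rightarrow> bool" where
  "is_quasi_iso R S f \<longleftrightarrow>
     is_dgmor R S f \<and>
     bij_betw (snd f) (dg_ker R) (dg_ker S) \<and>
     (\<forall>r\<in>carrier (deg0 R). \<forall>r'\<in>carrier (deg0 R).
        fst f r \<ominus>\<^bsub>deg0 S\<^esub> fst f r' \<in> dg_im S \<longrightarrow> r \<ominus>\<^bsub>deg0 R\<^esub> r' \<in> dg_im R) \<and>
     (\<forall>s\<in>carrier (deg0 S). \<exists>r\<in>carrier (deg0 R).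
        s \<ominus>\<^bsub>deg0 S\<^esub> fst f r \<in> dg_im S)"

definition is_corr :: "('a, 'b) dgr \<Rightarrow> ('c, 'd) dgr \<Rightarrow> ('e, 'h) dgr
    \<Rightarrow> ('e, 'h, 'a, 'b) dgmor \<Rightarrow> ('e, 'h, 'c, 'd) dgmor \<Rightarrow> bool" where
  "is_corr R1 R2 R12 f g \<longleftrightarrow> is_dgr R12 \<and> is_dgmor R12 R1 f \<and> is_dgmor R12 R2 g"

definition is_adm_corr :: "('a, 'b) dgr \<Rightarrow> ('c, 'd) dgr \<Rightarrow> ('e, 'h) dgr
    \<Rightarrow> ('e, 'h, 'a, 'b) dgmor \<Rightarrow> ('e, 'h, 'c, 'd) dgmor \<Rightarrow> bool" where
  "is_adm_corr R1 R2 R12 f g \<longleftrightarrow>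
     is_corr R1 R2 R12 f g \<and> is_quasi_iso R12 R1 f \<and>
     bij_betw (\<lambda>x. (snd f x, snd g x)) (carrier (degm1 R12))
              (carrier (degm1 R1) \<times> carrier (degm1 R2))"

definition is_corr_mor ::
  "('e, 'h) dgr \<Rightarrow> ('e, 'h, 'a, 'b) dgmor \<Rightarrow> ('e, 'h, 'c, 'd) dgmor
   \<Rightarrow> ('i, 'j) dgr \<Rightarrow> ('i, 'j, 'a, 'b) dgmor \<Rightarrow> ('i, 'j, 'c, 'd) dgmor
   \<Rightarrow> ('e, 'h, 'i, 'j) dgmor \<Rightarrow> bool" where
  "is_corr_mor R12 f g R12' f' g' h \<longleftrightarrow>
     is_dgmor R12 R12' h \<and>
     dgmor_eq R12 (dg_comp f' h) f \<and> dgmor_eq R12 (dg_comp g' h) g"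

end

theory Submission imports Defs begin

lemma add_hom_zero:
  assumes "abelian_group G" "abelian_group H" "\<phi> \<in> carrier G \<rightarrow> carrier H"
    "\<forall>x\<in>carrier G. \<forall>y\<in>carrier G. \<phi> (x \<oplus>\<^bsub>G\<^esub> y) = \<phi> x \<oplus>\<^bsub>H\<^esub> \<phi> y"
  shows "\<phi> \<zero>\<^bsub>G\<^esub> = \<zero>\<^bsub>H\<^esub>"
proof -
  interpret G: abelian_group G by fact
  interpret H: abelian_group H by fact
  have c: "\<phi> \<zero>\<^bsub>G\<^esub> \<in> carrier H" using assms(3) by auto
  have "\<phi> \<zero>\<^bsub>G\<^esub> \<oplus>\<^bsub>H\<^esub> \<phi> \<zero>\<^bsub>G\<^esub> = \<phi> \<zero>\<^bsub>G\<^esub>"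
    using assms(4) c by (metis G.l_zero G.zero_closed)
  thus ?thesis using c by simp
qed

lemma ring_minus_eq0:
  assumes "ring A" "a \<in> carrier A" "b \<in> carrier A" "a \<ominus>\<^bsub>A\<^esub> b = \<zero>\<^bsub>A\<^esub>"
  shows "a = b"
proof -
  interpret ring A by fact
  show ?thesis using assms
    by (metis add.inv_closed add.inv_equality minus_eq minus_minus)
qed

lemma ring_minus_add:
  assumes "ring A" "a \<in> carrier A" "b \<in> carrier A" "u \<in> carrier A" "a \<ominus>\<^bsub>A\<^esub> b = u"
  shows "a = b \<oplus>\<^bsub>A\<^esub> u"
proof -
  interpret ring A by fact
  have "b \<oplus>\<^bsub>A\<^esub> u = b \<oplus>\<^bsub>A\<^esub> (a \<oplus>\<^bsub>A\<^esub> \<ominus>\<^bsub>A\<^esub> b)" using assms minus_eq by simp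
  also have "\<dots> = a" using assms by (simp add: a_lcomm r_neg)
  finally show ?thesis by simp
qed

lemma hom_minus:
  assumes "ring A" "ring B" "\<phi> \<in> ring_hom A B" "a \<in> carrier A" "b \<in> carrier A"
  shows "\<phi> (a \<ominus>\<^bsub>A\<^esub> b) = \<phi> a \<ominus>\<^bsub>B\<^esub> \<phi> b"
proof -
  interpret ring_hom_ring A B \<phi> using assms by (simp add: ring_hom_ringI2)
  show ?thesis using assms by (simp add: R.minus_eq S.minus_eq)
qed

lemma hom_minus_self:
  assumes "ring B" "x \<in> carrier B"
  shows "x \<ominus>\<^bsub>B\<^esub> x = \<zero>\<^bsub>B\<^esub>"
proof -
  interpret ring B by fact
  show ?thesis using assms by (simp add: minus_eq r_neg)
qed

lemma inv_into_eq: "inj_on h S \<Longrightarrow> x \<in> S \<Longrightarrow> h x = y \<Longrightarrow> inv_into S h y = x"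
  by (metis inv_into_f_f)

theorem lemma4p2p4:
  fixes R1 :: "('a, 'b) dgr" and R2 :: "('c, 'd) dgr"
    and R12 :: "('e, 'h) dgr" and f :: "('e, 'h, 'a, 'b) dgmor" and g :: "('e, 'h, 'c, 'd) dgmor"
    and R12' :: "('i, 'j) dgr" and f' :: "('i, 'j, 'a, 'b) dgmor" and g' :: "('i, 'j, 'c, 'd) dgmor"
    and h :: "('e, 'h, 'i, 'j) dgmor"
  assumes "is_dgr R1" and "is_dgr R2"
    and "is_adm_corr R1 R2 R12 f g"
    and "is_adm_corr R1 R2 R12' f' g'"
    and "is_corr_mor R12 f g R12' f' g' h"
  shows "\<exists>k. is_corr_mor R12' f' g' R12 f g k \<and>
             dgmor_eq R12 (dg_comp k h) dg_id \<and>
             dgmor_eq R12' (dg_comp h k) dg_id"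
proof -
  obtain h0 h1 where hh: "h = (h0, h1)" by (cases h)
  obtain f0 f1 where ff: "f = (f0, f1)" by (cases f)
  obtain g0 g1 where gg: "g = (g0, g1)" by (cases g)
  obtain f0' f1' where ff': "f' = (f0', f1')" by (cases f')
  obtain g0' g1' where gg': "g' = (g0', g1')" by (cases g')
  define A where "A = deg0 R12"
  define M where "M = degm1 R12"
  define d where "d = diff R12"
  define A' where "A' = deg0 R12'"
  define M' where "M' = degm1 R12'"
  define d' where "d' = diff R12'"
  define B where "B = deg0 R1"
  define N where "N = degm1 R1"
  define d1 where "d1 = diff R1"
  define N2 where "N2 = degm1 R2"
  note defs = A_def M_def d_def A'_def M'_def d'_def B_def N_def d1_def N2_def
  have R12: "is_dgr R12" and R12': "is_dgr R12'"
    using assms(3,4) unfolding is_adm_corr_def is_corr_def by auto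
  have cA: "cring A" and mM: "module A M" and dM: "d \<in> carrier M \<rightarrow> carrier A"
    and dadd: "\<forall>x\<in>carrier M. \<forall>y\<in>carrier M. d (x \<oplus>\<^bsub>M\<^esub> y) = d x \<oplus>\<^bsub>A\<^esub> d y"
    and dsm: "\<forall>a\<in>carrier A. \<forall>x\<in>carrier M. d (a \<odot>\<^bsub>M\<^esub> x) = a \<otimes>\<^bsub>A\<^esub> d x"
    using R12 unfolding is_dgr_def defs by auto
  have cA': "cring A'" and mM': "module A' M'" and dM': "d' \<in> carrier M' \<rightarrow> carrier A'"
    and dadd': "\<forall>x\<in>carrier M'. \<forall>y\<in>carrier M'. d' (x \<oplus>\<^bsub>M'\<^esub> y) = d' x \<oplus>\<^bsub>A'\<^esub> d' y"
    using R12' unfolding is_dgr_def defs by auto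
  have cB: "cring B" and mN: "module B N" and dN: "d1 \<in> carrier N \<rightarrow> carrier B"
    and dadd1: "\<forall>x\<in>carrier N. \<forall>y\<in>carrier N. d1 (x \<oplus>\<^bsub>N\<^esub> y) = d1 x \<oplus>\<^bsub>B\<^esub> d1 y"
    using assms(1) unfolding is_dgr_def defs by auto
  interpret A: cring A by (rule cA)
  interpret A': cring A' by (rule cA')
  interpret B: cring B by (rule cB)
  interpret M: module A M by (rule mM)
  interpret M': module A' M' by (rule mM')
  interpret N: module B N by (rule mN)
  have d0: "d \<zero>\<^bsub>M\<^esub> = \<zero>\<^bsub>A\<^esub>"
    by (rule add_hom_zero[OF M.abelian_group_axioms A.abelian_group_axioms dM dadd])
  have d0': "d' \<zero>\<^bsub>M'\<^esub> = \<zero>\<^bsub>A'\<^esub>"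
    by (rule add_hom_zero[OF M'.abelian_group_axioms A'.abelian_group_axioms dM' dadd'])
  have d01: "d1 \<zero>\<^bsub>N\<^esub> = \<zero>\<^bsub>B\<^esub>"
    by (rule add_hom_zero[OF N.abelian_group_axioms B.abelian_group_axioms dN dadd1])
  have hmor: "is_dgmor R12 R12' h" using assms(5) unfolding is_corr_mor_def by auto
  have h0hom: "h0 \<in> ring_hom A A'" and h1c: "h1 \<in> carrier M \<rightarrow> carrier M'"
    and h1add: "\<forall>x\<in>carrier M. \<forall>y\<in>carrier M. h1 (x \<oplus>\<^bsub>M\<^esub> y) = h1 x \<oplus>\<^bsub>M'\<^esub> h1 y"
    and h1sm: "\<forall>a\<in>carrier A. \<forall>x\<in>carrier M. h1 (a \<odot>\<^bsub>M\<^esub> x) = h0 a \<odot>\<^bsub>M'\<^esub> h1 x"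
    and h1d: "\<forall>x\<in>carrier M. d' (h1 x) = h0 (d x)"
    using hmor unfolding is_dgmor_def defs hh by auto
  have h0c: "\<And>a. a \<in> carrier A \<Longrightarrow> h0 a \<in> carrier A'"
    using h0hom by (simp add: ring_hom_closed)
  have comp0: "\<And>a. a \<in> carrier A \<Longrightarrow> f0' (h0 a) = f0 a"
    and comp1: "\<And>x. x \<in> carrier M \<Longrightarrow> f1' (h1 x) = f1 x"
    and compg0: "\<And>a. a \<in> carrier A \<Longrightarrow> g0' (h0 a) = g0 a"
    and compg1: "\<And>x. x \<in> carrier M \<Longrightarrow> g1' (h1 x) = g1 x"
    using assms(5) unfolding is_corr_mor_def dgmor_eq_def dg_comp_def defs hh ff gg ff' gg' by auto
  have bij: "bij_betw (\<lambda>x. (f1 x, g1 x)) (carrier M) (carrier N \<times> carrier N2)"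
    using assms(3) unfolding is_adm_corr_def defs ff gg by auto
  have bij': "bij_betw (\<lambda>x. (f1' x, g1' x)) (carrier M') (carrier N \<times> carrier N2)"
    using assms(4) unfolding is_adm_corr_def defs ff' gg' by auto
  have qi: "is_quasi_iso R12 R1 f" using assms(3) unfolding is_adm_corr_def by auto
  have qi': "is_quasi_iso R12' R1 f'" using assms(4) unfolding is_adm_corr_def by auto
  have f0hom: "f0 \<in> ring_hom A B" and f1c: "f1 \<in> carrier M \<rightarrow> carrier N"
    and f1d: "\<forall>x\<in>carrier M. d1 (f1 x) = f0 (d x)"
    and fker: "bij_betw f1 (dg_ker R12) (dg_ker R1)"
    and fcok: "\<forall>s\<in>carrier B. \<exists>r\<in>carrier A. s \<ominus>\<^bsub>B\<^esub> f0 r \<in> dg_im R1"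
    and fcoi: "\<forall>r\<in>carrier A. \<forall>r'\<in>carrier A.
        f0 r \<ominus>\<^bsub>B\<^esub> f0 r' \<in> dg_im R1 \<longrightarrow> r \<ominus>\<^bsub>A\<^esub> r' \<in> dg_im R12"
    using qi unfolding is_quasi_iso_def is_dgmor_def defs ff by auto
  have f0'hom: "f0' \<in> ring_hom A' B" and f1'c: "f1' \<in> carrier M' \<rightarrow> carrier N"
    and f1'd: "\<forall>x\<in>carrier M'. d1 (f1' x) = f0' (d' x)"
    and fker': "bij_betw f1' (dg_ker R12') (dg_ker R1)"
    and fcoi': "\<forall>r\<in>carrier A'. \<forall>r'\<in>carrier A'.
        f0' r \<ominus>\<^bsub>B\<^esub> f0' r' \<in> dg_im R1 \<longrightarrow> r \<ominus>\<^bsub>A'\<^esub> r' \<in> dg_im R12'"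
    using qi' unfolding is_quasi_iso_def is_dgmor_def defs ff' by auto
  have ker: "dg_ker R12 = {x \<in> carrier M. d x = \<zero>\<^bsub>A\<^esub>}" unfolding dg_ker_def defs by simp
  have ker': "dg_ker R12' = {x \<in> carrier M'. d' x = \<zero>\<^bsub>A'\<^esub>}" unfolding dg_ker_def defs by simp
  have ker1: "dg_ker R1 = {x \<in> carrier N. d1 x = \<zero>\<^bsub>B\<^esub>}" unfolding dg_ker_def defs by simp
  have im: "dg_im R12 = d ` carrier M" unfolding dg_im_def defs by simp
  have im': "dg_im R12' = d' ` carrier M'" unfolding dg_im_def defs by simp
  have im1: "dg_im R1 = d1 ` carrier N" unfolding dg_im_def defs by simp
  have h1inj: "inj_on h1 (carrier M)"
  proof (rule inj_onI)
    fix x y assume "x \<in> carrier M" "y \<in> carrier M" "h1 x = h1 y"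
    then have "(f1 x, g1 x) = (f1 y, g1 y)" using comp1 compg1 by metis
    then show "x = y" using bij \<open>x \<in> carrier M\<close> \<open>y \<in> carrier M\<close>
      unfolding bij_betw_def inj_on_def by blast
  qed
  have h1surj: "h1 ` carrier M = carrier M'"
  proof
    show "h1 ` carrier M \<subseteq> carrier M'" using h1c by auto
    show "carrier M' \<subseteq> h1 ` carrier M"
    proof
      fix m assume m: "m \<in> carrier M'"
      then have "(f1' m, g1' m) \<in> carrier N \<times> carrier N2"
        using bij' unfolding bij_betw_def by auto
      then have "(f1' m, g1' m) \<in> (\<lambda>x. (f1 x, g1 x)) ` carrier M"
        using bij unfolding bij_betw_def by simp
      then obtain x where x: "x \<in> carrier M" "(f1 x, g1 x) = (f1' m, g1' m)"
        by (auto simp: image_iff)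
      then have "(f1' (h1 x), g1' (h1 x)) = (f1' m, g1' m)" using comp1 compg1 by simp
      moreover have "h1 x \<in> carrier M'" using x h1c by auto
      ultimately have "h1 x = m" using m bij' unfolding bij_betw_def inj_on_def by blast
      then show "m \<in> h1 ` carrier M" using x by auto
    qed
  qed
  have kerlift: "\<exists>y\<in>carrier M. d y = \<zero>\<^bsub>A\<^esub> \<and> h1 y = m"
    if m: "m \<in> carrier M'" "d' m = \<zero>\<^bsub>A'\<^esub>" for m
  proof -
    have "f1' m \<in> dg_ker R1"
      using m f1'c f1'd ring_hom_zero[OF f0'hom A'.ring_axioms B.ring_axioms] ker1 by auto
    then obtain y where y: "y \<in> dg_ker R12" "f1 y = f1' m"
      using fker unfolding bij_betw_def by (metis imageE)
    have yM: "y \<in> carrier M" "d y = \<zero>\<^bsub>A\<^esub>" using y ker by auto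
    have "h1 y \<in> dg_ker R12'"
      using yM h1c h1d ring_hom_zero[OF h0hom A.ring_axioms A'.ring_axioms] ker' by auto
    moreover have "m \<in> dg_ker R12'" using m ker' by auto
    moreover have "f1' (h1 y) = f1' m" using y yM comp1 by simp
    ultimately have "h1 y = m" using fker' unfolding bij_betw_def inj_on_def by blast
    then show ?thesis using yM by blast
  qed
  have h0inj: "inj_on h0 (carrier A)"
  proof (rule inj_onI)
    fix r r' assume r: "r \<in> carrier A" "r' \<in> carrier A" "h0 r = h0 r'"
    have "f0 r = f0 r'" using r comp0 by metis
    moreover have "f0 r' \<in> carrier B" using r f0hom ring_hom_closed by metis
    ultimately have "f0 r \<ominus>\<^bsub>B\<^esub> f0 r' = \<zero>\<^bsub>B\<^esub>"
      using hom_minus_self[OF B.ring_axioms] by simp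
    then have "f0 r \<ominus>\<^bsub>B\<^esub> f0 r' \<in> dg_im R1" using im1 d01 N.zero_closed by (metis image_eqI)
    then have "r \<ominus>\<^bsub>A\<^esub> r' \<in> dg_im R12" using fcoi r by blast
    then obtain x where x: "x \<in> carrier M" "d x = r \<ominus>\<^bsub>A\<^esub> r'" using im by auto
    have "d' (h1 x) = h0 (r \<ominus>\<^bsub>A\<^esub> r')" using x h1d by simp
    also have "\<dots> = h0 r \<ominus>\<^bsub>A'\<^esub> h0 r'"
      using hom_minus[OF A.ring_axioms A'.ring_axioms h0hom] r by simp
    also have "\<dots> = \<zero>\<^bsub>A'\<^esub>"
      using r(3) hom_minus_self[OF A'.ring_axioms h0c[OF r(2)]] by simp
    finally have "d' (h1 x) = \<zero>\<^bsub>A'\<^esub>" .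
    then obtain y where y: "y \<in> carrier M" "d y = \<zero>\<^bsub>A\<^esub>" "h1 y = h1 x"
      using kerlift h1c x by blast
    then have "y = x" using h1inj x unfolding inj_on_def by blast
    then have "r \<ominus>\<^bsub>A\<^esub> r' = \<zero>\<^bsub>A\<^esub>" using x y by simp
    then show "r = r'" using ring_minus_eq0[OF A.ring_axioms] r by blast
  qed
  have h0surj: "h0 ` carrier A = carrier A'"
  proof
    show "h0 ` carrier A \<subseteq> carrier A'" using h0c by auto
    show "carrier A' \<subseteq> h0 ` carrier A"
    proof
      fix s assume s: "s \<in> carrier A'"
      have "f0' s \<in> carrier B" using s f0'hom ring_hom_closed by metis
      then obtain r where r: "r \<in> carrier A" "f0' s \<ominus>\<^bsub>B\<^esub> f0 r \<in> dg_im R1"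
        using fcok by blast
      then have "f0' s \<ominus>\<^bsub>B\<^esub> f0' (h0 r) \<in> dg_im R1" using comp0 by simp
      then have "s \<ominus>\<^bsub>A'\<^esub> h0 r \<in> dg_im R12'" using fcoi' s h0c r by blast
      then have "s \<ominus>\<^bsub>A'\<^esub> h0 r \<in> d' ` carrier M'" using im' by simp
      then obtain m where m: "m \<in> carrier M'" "d' m = s \<ominus>\<^bsub>A'\<^esub> h0 r" by (metis imageE)
      have "m \<in> h1 ` carrier M" using h1surj m(1) by simp
      then obtain x where x: "x \<in> carrier M" "h1 x = m" by (metis imageE)
      have dx: "d x \<in> carrier A" using x dM by auto
      have "s \<ominus>\<^bsub>A'\<^esub> h0 r = h0 (d x)" using m x h1d by metis
      then have "s = h0 r \<oplus>\<^bsub>A'\<^esub> h0 (d x)"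
        by (rule ring_minus_add[OF A'.ring_axioms s h0c[OF r(1)] h0c[OF dx]])
      also have "\<dots> = h0 (r \<oplus>\<^bsub>A\<^esub> d x)" using h0hom r dx by (simp add: ring_hom_add)
      finally show "s \<in> h0 ` carrier A" using r dx by blast
    qed
  qed

  define k0 where "k0 = inv_into (carrier A) h0"
  define k1 where "k1 = inv_into (carrier M) h1"
  have k0c: "\<And>a. a \<in> carrier A' \<Longrightarrow> k0 a \<in> carrier A"
    unfolding k0_def using h0surj by (metis inv_into_into)
  have h0k0: "\<And>a. a \<in> carrier A' \<Longrightarrow> h0 (k0 a) = a"
    unfolding k0_def using h0surj by (metis f_inv_into_f)
  have k0h0: "\<And>a. a \<in> carrier A \<Longrightarrow> k0 (h0 a) = a"
    unfolding k0_def using h0inj by (metis inv_into_f_f)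
  have k1c: "\<And>a. a \<in> carrier M' \<Longrightarrow> k1 a \<in> carrier M"
    unfolding k1_def using h1surj by (metis inv_into_into)
  have h1k1: "\<And>a. a \<in> carrier M' \<Longrightarrow> h1 (k1 a) = a"
    unfolding k1_def using h1surj by (metis f_inv_into_f)
  have k1h1: "\<And>a. a \<in> carrier M \<Longrightarrow> k1 (h1 a) = a"
    unfolding k1_def using h1inj by (metis inv_into_f_f)
  have k0eq: "\<And>a y. a \<in> carrier A \<Longrightarrow> h0 a = y \<Longrightarrow> k0 y = a"
    unfolding k0_def using h0inj inv_into_eq by metis
  have k1eq: "\<And>a y. a \<in> carrier M \<Longrightarrow> h1 a = y \<Longrightarrow> k1 y = a"
    unfolding k1_def using h1inj inv_into_eq by metis
  have k0hom: "k0 \<in> ring_hom A' A"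
  proof (rule ring_hom_memI)
    fix x assume "x \<in> carrier A'" then show "k0 x \<in> carrier A" by (rule k0c)
  next
    fix x y assume xy: "x \<in> carrier A'" "y \<in> carrier A'"
    show "k0 (x \<otimes>\<^bsub>A'\<^esub> y) = k0 x \<otimes>\<^bsub>A\<^esub> k0 y"
    proof (rule k0eq)
      show "k0 x \<otimes>\<^bsub>A\<^esub> k0 y \<in> carrier A" using xy k0c by simp
      show "h0 (k0 x \<otimes>\<^bsub>A\<^esub> k0 y) = x \<otimes>\<^bsub>A'\<^esub> y"
        using xy k0c h0k0 ring_hom_mult[OF h0hom] by simp
    qed
  next
    fix x y assume xy: "x \<in> carrier A'" "y \<in> carrier A'"
    show "k0 (x \<oplus>\<^bsub>A'\<^esub> y) = k0 x \<oplus>\<^bsub>A\<^esub> k0 y"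
    proof (rule k0eq)
      show "k0 x \<oplus>\<^bsub>A\<^esub> k0 y \<in> carrier A" using xy k0c by simp
      show "h0 (k0 x \<oplus>\<^bsub>A\<^esub> k0 y) = x \<oplus>\<^bsub>A'\<^esub> y"
        using xy k0c h0k0 ring_hom_add[OF h0hom] by simp
    qed
  next
    show "k0 \<one>\<^bsub>A'\<^esub> = \<one>\<^bsub>A\<^esub>"
      using k0eq[of "\<one>\<^bsub>A\<^esub>"] ring_hom_one[OF h0hom] by simp
  qed
  have kmor: "is_dgmor R12' R12 (k0, k1)"
    unfolding is_dgmor_def fst_conv snd_conv
  proof (intro conjI ballI)
    show "k0 \<in> ring_hom (deg0 R12') (deg0 R12)" using k0hom by (simp add: defs)
    show "k1 \<in> carrier (degm1 R12') \<rightarrow> carrier (degm1 R12)" using k1c by (auto simp: defs)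
  next
    fix x y assume xy: "x \<in> carrier (degm1 R12')" "y \<in> carrier (degm1 R12')"
    show "k1 (x \<oplus>\<^bsub>degm1 R12'\<^esub> y) = k1 x \<oplus>\<^bsub>degm1 R12\<^esub> k1 y"
      unfolding M_def[symmetric] M'_def[symmetric]
    proof (rule k1eq)
      show "k1 x \<oplus>\<^bsub>M\<^esub> k1 y \<in> carrier M" using xy[folded M'_def] k1c by simp
      show "h1 (k1 x \<oplus>\<^bsub>M\<^esub> k1 y) = x \<oplus>\<^bsub>M'\<^esub> y"
        using xy[folded M'_def] k1c h1k1 h1add by simp
    qed
  next
    fix a x assume ax: "a \<in> carrier (deg0 R12')" "x \<in> carrier (degm1 R12')"
    show "k1 (a \<odot>\<^bsub>degm1 R12'\<^esub> x) = k0 a \<odot>\<^bsub>degm1 R12\<^esub> k1 x"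
      unfolding M_def[symmetric] M'_def[symmetric]
    proof (rule k1eq)
      show "k0 a \<odot>\<^bsub>M\<^esub> k1 x \<in> carrier M" using ax[folded M'_def A'_def] k1c k0c by simp
      show "h1 (k0 a \<odot>\<^bsub>M\<^esub> k1 x) = a \<odot>\<^bsub>M'\<^esub> x"
        using ax[folded M'_def A'_def] k1c k0c h1k1 h0k0 h1sm by simp
    qed
  next
    fix x assume x: "x \<in> carrier (degm1 R12')"
    show "diff R12 (k1 x) = k0 (diff R12' x)"
      unfolding d_def[symmetric] d'_def[symmetric]
    proof (rule k0eq[symmetric])
      show "d (k1 x) \<in> carrier A" using x[folded M'_def] k1c dM by auto
      show "h0 (d (k1 x)) = d' x" using x[folded M'_def] k1c h1k1 h1d by metis
    qed
  qed
  show ?thesis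
  proof (intro exI conjI)
    show "is_corr_mor R12' f' g' R12 f g (k0, k1)"
      unfolding is_corr_mor_def dgmor_eq_def dg_comp_def ff gg ff' gg' fst_conv snd_conv comp_def
      using kmor k0c k1c comp0 compg0 comp1 compg1 h0k0 h1k1
      by (metis A'_def A_def M'_def M_def)
    show "dgmor_eq R12 (dg_comp (k0, k1) h) dg_id"
      unfolding dgmor_eq_def dg_comp_def dg_id_def hh using k0h0 k1h1 by (simp add: defs)
    show "dgmor_eq R12' (dg_comp h (k0, k1)) dg_id"
      unfolding dgmor_eq_def dg_comp_def dg_id_def hh using h0k0 h1k1 by (simp add: defs)
  qed
qed
end
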